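(* Call a permutation $g$ of the set $\omega$ of natural numbers local if for every $i\in\omega$ there exists $j>i$ in $\omega$ such that $g$ carries $\{0,\ldots,j-1\}$ to itself. Then every permutation $f$ of $\omega$ is a product $gh$ of two local permutations $g,h$. *)

theory Defs
  imports Main
begin

definition local_perm :: "(nat \<Rightarrow> nat) \<Rightarrow> bool" where
  "local_perm g \<longleftrightarrow> bij g \<and> (\<forall>i. \<exists>j>i. g ` {..<j} = {..<j})"

end

theory Submission
  imports Defs
begin

lemma rank_exists:
  fixes A :: "nat \<Rightarrow> nat set" and n :: "nat \<Rightarrow> nat"
  assumes sub: "\<And>i. A i \<subseteq> A (Suc i)" and fin: "\<And>i. finite (A i)"
    and cardA: "\<And>i. card (A i) = n i" and A0: "A 0 = {}"
    and cov: "\<And>y. \<exists>i. y \<in> A i" and nge: "\<And>i. i \<le> n i"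
  shows "\<exists>r. bij r \<and> (\<forall>i. r ` A i = {..<n i})"
proof -
  have monoA: "A i \<subseteq> A j" if "i \<le> j" for i j
    using lift_Suc_mono_le[of A, OF sub that] .
  have monon: "n i \<le> n j" if "i \<le> j" for i j
    using card_mono[OF fin monoA[OF that]] cardA by simp
  define lev where "lev y = (LEAST i. y \<in> A (Suc i))" for y
  have levin: "y \<in> A (Suc (lev y))" for y
  proof -
    obtain i where "y \<in> A i" using cov by blast
    then have "i \<noteq> 0" using A0 by (cases i) auto
    then obtain j where "y \<in> A (Suc j)" using \<open>y \<in> A i\<close> by (cases i) auto
    then show ?thesis unfolding lev_def by (rule LeastI)
  qed
  have levout: "y \<notin> A (lev y)" for y
  proof (cases "lev y")
    case 0 then show ?thesis using A0 by simp
  next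
    case (Suc j)
    have "\<not> y \<in> A (Suc j)"
    proof
      assume "y \<in> A (Suc j)"
      then have "lev y \<le> j" unfolding lev_def by (rule Least_le)
      then show False using Suc by simp
    qed
    then show ?thesis using Suc by simp
  qed
  have lev_iff: "y \<in> A i \<longleftrightarrow> lev y < i" for y i
  proof
    assume "y \<in> A i"
    show "lev y < i"
    proof (rule ccontr)
      assume "\<not> lev y < i"
      then have "A i \<subseteq> A (lev y)" by (intro monoA) simp
      then show False using \<open>y \<in> A i\<close> levout by blast
    qed
  next
    assume "lev y < i"
    then show "y \<in> A i" using monoA[of "Suc (lev y)" i] levin by auto
  qed
  define S where "S y = {z \<in> A (Suc (lev y)) - A (lev y). z < y}" for y
  define r where "r y = n (lev y) + card (S y)" for y
  have finS: "finite (S y)" for y unfolding S_def using fin by auto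
  have rlow: "n (lev y) \<le> r y" for y unfolding r_def by simp
  have rup: "r y < n (Suc (lev y))" for y
  proof -
    let ?l = "lev y"
    have "S y \<subset> A (Suc ?l) - A ?l" unfolding S_def using levin levout by auto
    then have "card (S y) < card (A (Suc ?l) - A ?l)"
      using fin by (intro psubset_card_mono) auto
    also have "\<dots> = n (Suc ?l) - n ?l"
      using card_Diff_subset[OF fin sub] cardA by simp
    finally show ?thesis unfolding r_def using monon[of ?l "Suc ?l"] by simp
  qed
  have rlt: "r y < r y'" if "lev y < lev y'" for y y'
  proof -
    have "r y < n (Suc (lev y))" by (rule rup)
    also have "\<dots> \<le> n (lev y')" using that by (intro monon) simp
    also have "\<dots> \<le> r y'" by (rule rlow)
    finally show ?thesis .
  qed
  have rlt2: "r y < r y'" if "lev y = lev y'" "y < y'" for y y'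
  proof -
    have "S y \<subseteq> S y'" unfolding S_def using that by auto
    moreover have "y \<in> S y'" unfolding S_def using that levin[of y] levout[of y] by auto
    moreover have "y \<notin> S y" unfolding S_def by auto
    ultimately have "S y \<subset> S y'" by blast
    then have "card (S y) < card (S y')" using finS by (intro psubset_card_mono) auto
    then show ?thesis unfolding r_def using that by simp
  qed
  have inj: "inj r"
  proof (rule injI)
    fix y y' assume "r y = r y'"
    then show "y = y'" using rlt[of y y'] rlt[of y' y] rlt2[of y y'] rlt2[of y' y]
      by (metis linorder_neqE_nat less_irrefl)
  qed
  have img: "r ` A i = {..<n i}" for i
  proof (rule card_subset_eq)
    show "finite {..<n i}" by simp
    show "r ` A i \<subseteq> {..<n i}"
    proof
      fix x assume "x \<in> r ` A i"
      then obtain y where y: "y \<in> A i" "x = r y" by blast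
      then have "Suc (lev y) \<le> i" using lev_iff by auto
      then have "n (Suc (lev y)) \<le> n i" by (rule monon)
      then show "x \<in> {..<n i}" using rup[of y] y by simp
    qed
    show "card (r ` A i) = card {..<n i}"
      using card_image[OF inj_on_subset[OF inj]] cardA by simp
  qed
  have "surj r"
  proof -
    have "m \<in> range r" for m
    proof -
      have "m < n (Suc m)" using nge[of "Suc m"] by simp
      then have "m \<in> r ` A (Suc m)" using img by simp
      then show ?thesis by blast
    qed
    then show ?thesis by blast
  qed
  then show ?thesis using inj img by (auto simp: bij_def)
qed

theorem lemma5p1:
  fixes f :: "nat \<Rightarrow> nat"
  assumes "bij f"
  shows "\<exists>g h. local_perm g \<and> local_perm h \<and> f = g \<circ> h"
proof -
  have injf: "inj f" and surjf: "surj f" using assms by (auto simp: bij_def)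
  define step where "step a = a + 1 + (\<Sum>x<a. f x + inv f x)" for a
  define n where "n k = (step ^^ k) 0" for k
  have nS: "n (Suc k) = step (n k)" for k unfolding n_def by simp
  have stepf: "f x < step a \<and> inv f x < step a" if "x < a" for x a
  proof -
    have "f x + inv f x \<le> (\<Sum>x<a. f x + inv f x)"
      using that by (intro member_le_sum) auto
    then show ?thesis unfolding step_def by simp
  qed
  have nge: "k \<le> n k" for k
    by (induction k) (auto simp: nS step_def)
  define A where "A i = (if even i then {..<n i} else f -` {..<n i})" for i
  have cardv: "card (f -` {..<N}) = N" for N
    using card_vimage_inj[OF injf, of "{..<N}"] surjf by simp
  have finv: "finite (f -` {..<N})" for N
    using finite_vimageI[OF _ injf] by simp
  have sub: "A i \<subseteq> A (Suc i)" for i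
  proof (cases "even i")
    case True
    then show ?thesis unfolding A_def using stepf by (auto simp: nS)
  next
    case False
    have "x < n (Suc i)" if "f x < n i" for x
      using stepf[OF that] inv_f_f[OF injf, of x] by (simp add: nS)
    then show ?thesis using False unfolding A_def by auto
  qed
  have fin: "finite (A i)" for i unfolding A_def using finv by auto
  have cardA: "card (A i) = n i" for i unfolding A_def using cardv by auto
  have A0: "A 0 = {}" unfolding A_def n_def by simp
  have cov: "\<exists>i. y \<in> A i" for y
  proof -
    have "y < n (2 * Suc y)" using nge[of "2 * Suc y"] by simp
    then have "y \<in> A (2 * Suc y)" unfolding A_def by simp
    then show ?thesis by blast
  qed
  obtain r where r: "bij r" "\<And>i. r ` A i = {..<n i}"
    using rank_exists[OF sub fin cardA A0 cov nge] by blast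
  have injr: "inj r" using r(1) by (simp add: bij_def)
  define g where "g = f \<circ> inv r"
  have fg: "f = g \<circ> r" unfolding g_def using injr by (auto simp: fun_eq_iff)
  have lh: "local_perm r"
    unfolding local_perm_def
  proof (intro conjI allI)
    show "bij r" by (rule r(1))
    fix i
    have "i < n (2 * Suc i)" using nge[of "2 * Suc i"] by simp
    moreover have "r ` {..<n (2 * Suc i)} = {..<n (2 * Suc i)}"
      using r(2)[of "2 * Suc i"] unfolding A_def by simp
    ultimately show "\<exists>j>i. r ` {..<j} = {..<j}" by blast
  qed
  have lg: "local_perm g"
    unfolding local_perm_def
  proof (intro conjI allI)
    show "bij g" unfolding g_def using assms r(1) by (intro bij_comp bij_imp_bij_inv)
    fix i
    let ?j = "n (Suc (2 * i))"
    have "i < ?j" using nge[of "Suc (2 * i)"] by simp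
    moreover have "g ` {..<?j} = {..<?j}"
    proof -
      have "r ` (f -` {..<?j}) = {..<?j}" using r(2)[of "Suc (2 * i)"] unfolding A_def by simp
      then have "inv r ` {..<?j} = f -` {..<?j}"
        using image_inv_f_f[OF injr] by metis
      then have "g ` {..<?j} = f ` (f -` {..<?j})" unfolding g_def by (metis image_comp)
      then show ?thesis using surjf by (simp add: image_vimage_eq)
    qed
    ultimately show "\<exists>j>i. g ` {..<j} = {..<j}" by blast
  qed
  show ?thesis using lg lh fg by blast
qed

end
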